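(* A skew lattice $S$ is a weak distributive solution of the Yang–Baxter equation if and only if it satisfies, for all $x,y,z\in S$, \[ (x\wedge y\wedge x)\vee((x\vee y\vee x)\wedge z\wedge(x\vee y\vee x))\vee(x\wedge y\wedge x) =(x\vee(y\wedge z\wedge y)\vee x)\wedge(y\vee z\vee y)\wedge(x\vee(y\wedge z\wedge y)\vee x). \] In particular, weak distributive solutions form a variety of skew lattices.
   Context: A skew lattice is a set $S$ with two binary operations $\wedge,\vee$, each idempotent and associative, satisfying the absorption laws $x\wedge(x\vee y)=x=x\vee(x\wedge y)$ and $(x\wedge y)\vee y=y=(x\vee y)\wedge y$ for all $x,y\in S$. $S$ is a weak distributive solution if $r_W:S\times S\to S\times S$, $r_W(x,y)=(x\wedge y\wedge x,\,x\vee y\vee x)$, satisfies $(r_W\times\mathrm{id})\circ(\mathrm{id}\times r_W)\circ(r_W\times\mathrm{id})=(\mathrm{id}\times r_W)\circ(r_W\times\mathrm{id})\circ(\mathrm{id}\times r_W)$. *)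

theory Defs
  imports Main
begin

definition skew_lattice :: "('a \<Rightarrow> 'a \<Rightarrow> 'a) \<Rightarrow> ('a \<Rightarrow> 'a \<Rightarrow> 'a) \<Rightarrow> bool" where
  "skew_lattice m j \<longleftrightarrow>
     (\<forall>x. m x x = x) \<and> (\<forall>x. j x x = x) \<and>
     (\<forall>x y z. m (m x y) z = m x (m y z)) \<and>
     (\<forall>x y z. j (j x y) z = j x (j y z)) \<and>
     (\<forall>x y. m x (j x y) = x \<and> j x (m x y) = x) \<and>
     (\<forall>x y. j (m x y) y = y \<and> m (j x y) y = y)"

definition rW :: "('a \<Rightarrow> 'a \<Rightarrow> 'a) \<Rightarrow> ('a \<Rightarrow> 'a \<Rightarrow> 'a) \<Rightarrow> 'a \<times> 'a \<Rightarrow> 'a \<times> 'a" where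
  "rW m j p = (case p of (x, y) \<Rightarrow> (m (m x y) x, j (j x y) x))"

definition r12 :: "('a \<times> 'a \<Rightarrow> 'a \<times> 'a) \<Rightarrow> 'a \<times> 'a \<times> 'a \<Rightarrow> 'a \<times> 'a \<times> 'a" where
  "r12 r t = (case t of (x, y, z) \<Rightarrow> (fst (r (x, y)), snd (r (x, y)), z))"

definition r23 :: "('a \<times> 'a \<Rightarrow> 'a \<times> 'a) \<Rightarrow> 'a \<times> 'a \<times> 'a \<Rightarrow> 'a \<times> 'a \<times> 'a" where
  "r23 r t = (case t of (x, y, z) \<Rightarrow> (x, r (y, z)))"

definition weak_distributive_solution :: "('a \<Rightarrow> 'a \<Rightarrow> 'a) \<Rightarrow> ('a \<Rightarrow> 'a \<Rightarrow> 'a) \<Rightarrow> bool" where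
  "weak_distributive_solution m j \<longleftrightarrow>
     r12 (rW m j) \<circ> r23 (rW m j) \<circ> r12 (rW m j) = r23 (rW m j) \<circ> r12 (rW m j) \<circ> r23 (rW m j)"

end

theory Submission imports Defs begin
lemma reg:
  fixes m j :: "'a \<Rightarrow> 'a \<Rightarrow> 'a"
  assumes i1: "\<And>x. m x x = x" and i2: "\<And>x. j x x = x"
  and a1: "\<And>x y z. m (m x y) z = m x (m y z)"
  and a2: "\<And>x y z. j (j x y) z = j x (j y z)"
  and b1: "\<And>x y. m x (j x y) = x" and b2: "\<And>x y. j x (m x y) = x"
  and b3: "\<And>x y. j (m x y) y = y" and b4: "\<And>x y. m (j x y) y = y"
  shows "m x (m y (m x (m z x))) = m x (m y (m z x))"
proof -
  have f1: "\<forall>a aa ab. j ab (j (m aa (m ab a)) ab) = ab"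
    by (metis a2 b1 b2 b3)
  have f2: "\<forall>a aa ab. m a (m (j a aa) ab) = m a ab"
    by (metis (no_types) a1 b1)
  then have f3: "\<forall>a aa ab. m (j (m ab aa) ab) (m (j ab a) ab) = ab"
    using f1 by (smt (verit) a1 a2 b1 b2 b4)
  have "\<forall>a aa. m (j aa (m a aa)) aa = j aa (m a aa)"
    using f2 f1 by (metis a1 a2 b1)
  then have "\<forall>a aa ab. m ab (m aa (j ab (m a ab))) = m ab (m aa ab)"
    using f3 f2 by (metis (no_types) a1)
  then show ?thesis
    by (metis (no_types) a1 b4)
qed

lemma comp1:
  fixes m j :: "'a \<Rightarrow> 'a \<Rightarrow> 'a"
  assumes i1: "\<And>x. m x x = x" and i2: "\<And>x. j x x = x"
  and a1: "\<And>x y z. m (m x y) z = m x (m y z)"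
  and a2: "\<And>x y z. j (j x y) z = j x (j y z)"
  and b1: "\<And>x y. m x (j x y) = x" and b2: "\<And>x y. j x (m x y) = x"
  and b3: "\<And>x y. j (m x y) y = y" and b4: "\<And>x y. m (j x y) y = y"
  shows "m (m (m (m x y) x) (m (m (j (j x y) x) z) (j (j x y) x))) (m (m x y) x)
       = m (m x (m (m y z) y)) x"
proof -
  have R: "\<And>x y z. m x (m y (m x (m z x))) = m x (m y (m z x))"
    by (rule reg[of m j], fact+)
  have e1: "\<And>w. m x (m (j (j x y) x) w) = m x w" by (metis a1 a2 b1)
  have e2: "\<And>w. m (j (j x y) x) (m x w) = m x w" by (metis a1 b4)
  have "m (m (m (m x y) x) (m (m (j (j x y) x) z) (j (j x y) x))) (m (m x y) x)
      = m x (m y (m x (m z (m x (m y x)))))"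
    by (simp only: a1 e1 e2)
  also have "\<dots> = m x (m y (m z (m y x)))"
    by (metis R a1)
  finally show ?thesis by (simp add: a1)
qed

lemma comp3:
  fixes m j :: "'a \<Rightarrow> 'a \<Rightarrow> 'a"
  assumes i1: "\<And>x. m x x = x" and i2: "\<And>x. j x x = x"
  and a1: "\<And>x y z. m (m x y) z = m x (m y z)"
  and a2: "\<And>x y z. j (j x y) z = j x (j y z)"
  and b1: "\<And>x y. m x (j x y) = x" and b2: "\<And>x y. j x (m x y) = x"
  and b3: "\<And>x y. j (m x y) y = y" and b4: "\<And>x y. m (j x y) y = y"
  shows "j (j (j (j x y) x) z) (j (j x y) x)
       = j (j (j (j x (m (m y z) y)) x) (j (j y z) y)) (j (j x (m (m y z) y)) x)"
proof -
  have R: "\<And>x y z. j x (j y (j x (j z x))) = j x (j y (j z x))"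
    by (rule reg[of j m], fact+)
  have c1: "\<And>w. j (m (m y z) y) (j y w) = j y w" by (metis a2 b3)
  have c0: "j y (m (m y z) y) = y" by (simp add: a1 b2)
  have c2: "\<And>w. j y (j (m (m y z) y) w) = j y w" by (metis a2 c0)
  have "j (j (j (j x y) x) z) (j (j x y) x) = j x (j y (j x (j z (j x (j y x)))))"
    by (simp only: a2)
  also have "\<dots> = j x (j y (j z (j y x)))" by (metis R a2)
  finally have L: "j (j (j (j x y) x) z) (j (j x y) x) = j x (j y (j z (j y x)))" .
  have "j (j (j (j x (m (m y z) y)) x) (j (j y z) y)) (j (j x (m (m y z) y)) x)
     = j x (j (m (m y z) y) (j x (j (j y (j z y)) (j x (j (m (m y z) y) x)))))"
    by (simp only: a2)
  also have "\<dots> = j x (j (m (m y z) y) (j (j y (j z y)) (j (m (m y z) y) x)))"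
    by (metis R a2)
  also have "\<dots> = j x (j y (j z (j y x)))"
    by (simp only: a2 c1 c2)
  finally show ?thesis using L by simp
qed

theorem mainTheorem16:
  fixes m j :: "'a \<Rightarrow> 'a \<Rightarrow> 'a"
  assumes "skew_lattice m j"
  shows "weak_distributive_solution m j \<longleftrightarrow>
    (\<forall>x y z.
       j (j (m (m x y) x) (m (m (j (j x y) x) z) (j (j x y) x))) (m (m x y) x)
     = m (m (j (j x (m (m y z) y)) x) (j (j y z) y)) (j (j x (m (m y z) y)) x))"
proof -
  have i1: "\<And>x. m x x = x" and i2: "\<And>x. j x x = x"
  and a1: "\<And>x y z. m (m x y) z = m x (m y z)"
  and a2: "\<And>x y z. j (j x y) z = j x (j y z)"
  and b1: "\<And>x y. m x (j x y) = x" and b2: "\<And>x y. j x (m x y) = x"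
  and b3: "\<And>x y. j (m x y) y = y" and b4: "\<And>x y. m (j x y) y = y"
    using assms unfolding skew_lattice_def by blast+
  note C1 = comp1[of m j, OF i1 i2 a1 a2 b1 b2 b3 b4]
  note C3 = comp3[of m j, OF i1 i2 a1 a2 b1 b2 b3 b4]
  show ?thesis
    unfolding weak_distributive_solution_def fun_eq_iff
    apply (simp add: rW_def r12_def r23_def)
    using C1 C3 by presburger
qed

end
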